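(* Let $q$ be an odd prime power, $\mathbb F_q$ the finite field of order $q$, $d$ a positive integer, and $A\subset \mathbb F_q^d$. Let $\mathcal{SQ}(A)$ be the number of pairs $(x,y)\in A\times A$ such that $\eta(\|x-y\|)=1$. \begin{enumerate} \item If $d\equiv 2\pmod 4$ and $q\equiv 3\pmod 4$, then $$\mathcal{SQ}(A)\le \frac{|A|^2}{2} + \frac{q^{\frac{d}{2}} |A|}{2} -\frac{|A|^2}{2q}- \frac{q^{\frac{d-2}{2}}|A|}{2}.$$ \item Let $d\equiv 0\pmod 4$, or $d\equiv 2\pmod 4$ and $q\equiv 1\pmod 4$. If $|A|\ge (q^{d/2}+q)/(1+q^{-(d-2)/2})$, then $$\mathcal{SQ}(A)\le \frac{|A|^2}{2} + \frac{q^{\frac{d}{2}} |A|}{2}-\frac{|A|^2}{q^{\frac{d}{2}}} -\frac{|A|^2}{2q}+ \frac{q^{\frac{d-2}{2}}|A|}{2}.$$ If $|A|\le (q^{d/2}+q)/(1+q^{-(d-2)/2})$, then $$\mathcal{SQ}(A) \le \frac{|A|^2}{2} + \frac{q^{\frac{d}{2}} |A|}{2} - \frac{|A|^2}{2 q^{\frac{d}{2}}} -\frac{|A|}{2}.$$ \end{enumerate}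
   Context: For $x,y\in\mathbb F_q^d$, $\|x-y\|:=(x_1-y_1)^2+\cdots+(x_d-y_d)^2\in\mathbb F_q$. $\eta$ denotes the quadratic character of $\mathbb F_q$ (so $\eta(a)=1$ if $a$ is a nonzero square, $\eta(a)=-1$ if $a$ is a non-square) with the convention $\eta(0)=0$. *)

theory Defs
  imports "HOL-Analysis.Analysis"
begin

definition qchar :: "'a::{finite,field} \<Rightarrow> int" where
  "qchar a = (if a = 0 then 0 else if (\<exists>b. b ^ 2 = a) then 1 else -1)"

definition fdist :: "'a::{finite,field} ^ 'n \<Rightarrow> 'a ^ 'n \<Rightarrow> 'a" where
  "fdist x y = (\<Sum>i\<in>UNIV. (x $ i - y $ i) ^ 2)"

definition SQ :: "('a::{finite,field} ^ 'n) set \<Rightarrow> nat" where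
  "SQ A = card {(x, y). x \<in> A \<and> y \<in> A \<and> qchar (fdist x y) = 1}"

end

theory Submission
  imports Defs "HOL-Computational_Algebra.Polynomial"
begin

lemma sum_shift_add:
  fixes h :: "'b::{finite,ab_group_add} \<Rightarrow> 'c::comm_monoid_add"
  shows "(\<Sum>x\<in>UNIV. h (x + c)) = (\<Sum>x\<in>UNIV. h x)"
  by (rule sum.reindex_bij_witness[of _ "\<lambda>x. x - c" "\<lambda>x. x + c"]) auto

lemma sum_shift_mult:
  fixes h :: "'b::{finite,field} \<Rightarrow> 'c::comm_monoid_add"
  assumes "c \<noteq> 0"
  shows "(\<Sum>x\<in>UNIV. h (c * x)) = (\<Sum>x\<in>UNIV. h x)"
  by (rule sum.reindex_bij_witness[of _ "\<lambda>x. x / c" "\<lambda>x. c * x"]) (use assms in auto)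

lemma of_nat_card_eq_0: "of_nat CARD('a) = (0::'a::{finite,field})"
proof -
  have "(\<Sum>x\<in>UNIV. (x::'a)) = (\<Sum>x\<in>UNIV. x + 1)"
    using sum_shift_add[of "\<lambda>x. x" 1] by (simp only: eq_commute)
  also have "\<dots> = (\<Sum>x\<in>UNIV. x) + of_nat CARD('a)"
    by (simp add: sum.distrib)
  finally show ?thesis by simp
qed

lemma two_ne_0:
  assumes "odd CARD('a::{finite,field})"
  shows "(2::'a) \<noteq> 0"
proof
  assume h: "(2::'a) = 0"
  obtain k where k: "CARD('a) = 2*k+1" using assms oddE by blast
  have "(of_nat (2*k+1)::'a) = 0" using of_nat_card_eq_0[where 'a='a] k by simp
  then have "(of_nat 2 * of_nat k + 1 :: 'a) = 0" by (simp add: add.commute)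
  with h show False by simp
qed

lemma fermat_field:
  fixes x :: "'a::{finite,field}"
  assumes "x \<noteq> 0"
  shows "x ^ (CARD('a) - 1) = 1"
proof -
  let ?S = "UNIV - {0::'a}"
  have "(\<Prod>y\<in>?S. x * y) = (\<Prod>y\<in>?S. y)"
    by (rule prod.reindex_bij_witness[of _ "\<lambda>y. y / x" "\<lambda>y. x * y"]) (use assms in auto)
  moreover have "(\<Prod>y\<in>?S. x * y) = x ^ card ?S * (\<Prod>y\<in>?S. y)"
    by (simp add: prod.distrib)
  moreover have "card ?S = CARD('a) - 1" by (simp add: card_Diff_subset)
  moreover have "(\<Prod>y\<in>?S. y) \<noteq> 0" by simp
  ultimately show ?thesis by simp
qed

lemma sq_eq_sq_iff:
  fixes a b :: "'a::field"
  shows "a^2 = b^2 \<longleftrightarrow> a = b \<or> a = -b"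
proof -
  have "a^2 - b^2 = (a - b) * (a + b)" by (simp add: power2_eq_square algebra_simps)
  then show ?thesis by (auto simp: eq_neg_iff_add_eq_0)
qed

lemma card_nz_squares:
  assumes "odd CARD('a::{finite,field})"
  shows "2 * card {y::'a. y \<noteq> 0 \<and> (\<exists>b. b^2 = y)} = CARD('a) - 1"
proof -
  let ?S = "UNIV - {0::'a}"
  let ?T = "{y::'a. y \<noteq> 0 \<and> (\<exists>b. b^2 = y)}"
  have T: "?T = (\<lambda>b. b^2) ` ?S" by auto
  have "card ?S = (\<Sum>x\<in>?S. (1::nat))" by simp
  also have "\<dots> = (\<Sum>y\<in>(\<lambda>b. b^2) ` ?S. \<Sum>x\<in>{x\<in>?S. x^2 = y}. 1)"
    by (rule sum.image_gen) simp
  also have "\<dots> = (\<Sum>y\<in>(\<lambda>b. b^2) ` ?S. 2)"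
  proof (rule sum.cong[OF refl])
    fix y assume "y \<in> (\<lambda>b. b^2) ` ?S"
    then obtain b where b: "b \<noteq> 0" "y = b^2" by auto
    have "b \<noteq> -b" using b two_ne_0[OF assms] by (metis add_eq_0_iff2 mult_2 mult_eq_0_iff)
    have "{x\<in>?S. x^2 = y} = {b, -b}" using b sq_eq_sq_iff[of _ b] by auto
    then show "(\<Sum>x\<in>{x\<in>?S. x^2 = y}. 1) = (2::nat)" using \<open>b \<noteq> -b\<close> by simp
  qed
  finally have "card ?S = 2 * card ?T" using T by simp
  moreover have "card ?S = CARD('a) - 1" by (simp add: card_Diff_subset)
  ultimately show ?thesis by simp
qed

definition hq :: "'a::{finite,field} itself \<Rightarrow> nat" where
  "hq _ = (CARD('a) - 1) div 2"

lemma euler_crit: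
  fixes a :: "'a::{finite,field}"
  assumes odd: "odd CARD('a)" and a: "a \<noteq> 0"
  shows "((\<exists>b. b^2 = a) \<longrightarrow> a ^ hq TYPE('a) = 1) \<and> ((\<not>(\<exists>b. b^2 = a)) \<longrightarrow> a ^ hq TYPE('a) = -1)"
proof -
  let ?k = "hq TYPE('a)"
  let ?T = "{y::'a. y \<noteq> 0 \<and> (\<exists>b. b^2 = y)}"
  have q2: "CARD('a) \<ge> 2"
  proof -
    have "card {0::'a, 1} \<le> CARD('a)" by (rule card_mono) auto
    then show ?thesis by simp
  qed
  have k1: "?k \<ge> 1" using q2 odd unfolding hq_def by presburger
  have kk: "2 * ?k = CARD('a) - 1" using odd unfolding hq_def by presburger
  have sqr: "y ^ ?k = 1" if "y \<in> ?T" for y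
  proof -
    from that obtain b where b: "b^2 = y" "b \<noteq> 0" by auto
    have "y ^ ?k = b ^ (2 * ?k)" using b by (simp add: power_mult)
    also have "\<dots> = 1" using kk fermat_field[OF b(2)] by simp
    finally show ?thesis .
  qed
  define p :: "'a poly" where "p = monom 1 ?k - 1"
  have dle: "degree p \<le> ?k" unfolding p_def
    by (rule degree_diff_le) (auto simp: degree_monom_le)
  have "coeff p ?k = 1" using k1 by (simp add: p_def coeff_monom)
  then have "?k \<le> degree p" by (intro le_degree) simp
  with dle have degp: "degree p = ?k" by simp
  have "p \<noteq> 0" using degp k1 by auto
  then have "card {x. poly p x = 0} \<le> ?k" using card_poly_roots_bound[of p] degp by simp
  moreover have "?T \<subseteq> {x. poly p x = 0}" using sqr by (auto simp: p_def poly_monom)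
  moreover have "card ?T = ?k" using card_nz_squares[OF odd] kk by simp
  moreover have "finite {x. poly p x = 0}" by simp
  ultimately have Teq: "?T = {x. poly p x = 0}"
    using card_mono[of "{x. poly p x = 0}" ?T] card_subset_eq[of "{x. poly p x = 0}" ?T] by linarith
  show ?thesis
  proof (intro conjI impI)
    assume "\<exists>b. b^2 = a" then show "a ^ ?k = 1" using sqr a by auto
  next
    assume ns: "\<not>(\<exists>b. b^2 = a)"
    then have "a ^ ?k \<noteq> 1" using Teq by (auto simp: p_def poly_monom)
    moreover have "(a ^ ?k)^2 = 1^2" using fermat_field[OF a] kk
      by (metis power_mult power_one mult.commute)
    ultimately show "a ^ ?k = -1" using sq_eq_sq_iff by blast
  qed
qed

lemma qchar_range: "qchar a \<in> {-1, 0, 1}"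
  unfolding qchar_def by auto

lemma of_int_inj3:
  assumes "odd CARD('a::{finite,field})" "i \<in> {-1,0,1::int}" "j \<in> {-1,0,1::int}"
    and "(of_int i :: 'a) = of_int j"
  shows "i = j"
proof -
  have h1: "(-1::'a) \<noteq> 1" using two_ne_0[OF assms(1)] by (simp add: eq_neg_iff_add_eq_0 one_add_one)
  have h2: "(-1::'a) \<noteq> 0" by simp
  from assms(2,3) have "i = -1 \<or> i = 0 \<or> i = 1" "j = -1 \<or> j = 0 \<or> j = 1" by auto
  then show ?thesis using assms(4) h1 h2 by (elim disjE) simp_all
qed

lemma qchar_of:
  fixes a :: "'a::{finite,field}"
  assumes odd: "odd CARD('a)"
  shows "(of_int (qchar a) :: 'a) = a ^ hq TYPE('a)"
proof (cases "a = 0")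
  case True
  have q2: "CARD('a) \<ge> 2"
  proof -
    have "card {0::'a, 1} \<le> CARD('a)" by (rule card_mono) auto
    then show ?thesis by simp
  qed
  have "hq TYPE('a) \<ge> 1" using q2 odd unfolding hq_def by presburger
  then show ?thesis using True by (simp add: qchar_def)
next
  case False
  then show ?thesis using euler_crit[OF odd False] by (auto simp: qchar_def)
qed

lemma qchar_mult:
  fixes a b :: "'a::{finite,field}"
  assumes odd: "odd CARD('a)"
  shows "qchar (a * b) = qchar a * qchar b"
proof -
  have "(of_int (qchar (a*b)) :: 'a) = of_int (qchar a * qchar b)"
    by (simp add: qchar_of[OF odd] power_mult_distrib)
  moreover have "qchar a * qchar b \<in> {-1,0,1}" using qchar_range[of a] qchar_range[of b] by auto
  ultimately show ?thesis using of_int_inj3[OF odd qchar_range] by blast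
qed

lemma qchar_sq: "x \<noteq> 0 \<Longrightarrow> qchar (x^2) = 1"
  unfolding qchar_def by auto

lemma qchar_0[simp]: "qchar 0 = 0" unfolding qchar_def by auto
lemma qchar_1[simp]: "qchar 1 = 1" unfolding qchar_def by (auto intro: exI[of _ 1])

lemma qchar_inverse:
  fixes a :: "'a::{finite,field}"
  assumes odd: "odd CARD('a)"
  shows "qchar (inverse a) = qchar a"
proof (cases "a = 0")
  case False
  have "qchar (inverse a) * qchar a = 1" using qchar_mult[OF odd, of "inverse a" a] False by simp
  then show ?thesis using qchar_range[of a] by auto
qed simp

lemma qchar_sq_nonzero: "a \<noteq> 0 \<Longrightarrow> qchar a * qchar a = 1"
  unfolding qchar_def by auto

lemma qchar_minus_one_3:
  assumes odd: "odd CARD('a::{finite,field})" and m: "CARD('a) mod 4 = 3"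
  shows "qchar (-1::'a) = -1"
proof -
  have "odd (hq TYPE('a))" using m unfolding hq_def by presburger
  then have h: "(of_int (qchar (-1::'a)) :: 'a) = of_int (-1)" by (simp add: qchar_of[OF odd])
  show ?thesis using of_int_inj3[OF odd qchar_range _ h] by simp
qed

lemma qchar_minus_one_1:
  assumes odd: "odd CARD('a::{finite,field})" and m: "CARD('a) mod 4 = 1"
  shows "qchar (-1::'a) = 1"
proof -
  have "even (hq TYPE('a))" using m unfolding hq_def by presburger
  then have h: "(of_int (qchar (-1::'a)) :: 'a) = of_int 1" by (simp add: qchar_of[OF odd])
  show ?thesis using of_int_inj3[OF odd qchar_range _ h] by simp
qed

lemma qchar_sum_zero:
  assumes odd: "odd CARD('a::{finite,field})"
  shows "(\<Sum>x\<in>UNIV. qchar (x::'a)) = 0"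
proof -
  have "\<not> inj (\<lambda>x::'a. x^2)"
  proof
    assume "inj (\<lambda>x::'a. x^2)"
    then have "(1::'a) = -1" by (rule injD) simp
    then show False using two_ne_0[OF odd] by (simp add: eq_neg_iff_add_eq_0 one_add_one)
  qed
  then have "\<not> surj (\<lambda>x::'a. x^2)" by (meson finite_UNIV_surj_inj finite_class.finite_UNIV)
  then obtain a :: 'a where a: "\<And>b. b^2 \<noteq> a" by (metis surj_def)
  then have a0: "a \<noteq> 0" by (metis zero_power2)
  have qa: "qchar a = -1" using a a0 unfolding qchar_def by auto
  have "(\<Sum>x\<in>UNIV. qchar (x::'a)) = (\<Sum>x\<in>UNIV. qchar (a * x))"
    using sum_shift_mult[OF a0, of qchar] by simp
  also have "\<dots> = - (\<Sum>x\<in>UNIV. qchar (x::'a))"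
    by (simp add: qchar_mult[OF odd] qa sum_negf)
  finally show ?thesis by simp
qed

definition sg :: "'a::ab_group_add set \<Rightarrow> bool" where
  "sg H \<longleftrightarrow> 0 \<in> H \<and> (\<forall>x\<in>H. \<forall>y\<in>H. x + y \<in> H) \<and> (\<forall>x\<in>H. - x \<in> H)"

lemma sg_diff: "sg H \<Longrightarrow> x \<in> H \<Longrightarrow> y \<in> H \<Longrightarrow> x - y \<in> H"
  unfolding sg_def by (metis diff_conv_add_uminus)

lemma sg_mult: "sg H \<Longrightarrow> x \<in> H \<Longrightarrow> of_nat k * (x::'a::field) \<in> H"
  by (induction k) (auto simp: sg_def distrib_right)

lemma char_exists:
  "\<exists>\<psi>::'a::{finite,field} \<Rightarrow> complex. (\<forall>x y. \<psi> (x + y) = \<psi> x * \<psi> y) \<and> (\<forall>x. norm (\<psi> x) = 1) \<and> (\<exists>c. \<psi> c \<noteq> 1)"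
proof -
  let ?A = "{K::'a set. sg K \<and> K \<noteq> UNIV}"
  have s0: "sg {0::'a}" by (simp add: sg_def)
  have "(1::'a) \<notin> {0}" by simp
  then have "{0::'a} \<noteq> UNIV" by blast
  with s0 have "{0} \<in> ?A" by blast
  then obtain H where H: "H \<in> ?A" and Hmax: "\<And>K. K \<in> ?A \<Longrightarrow> H \<subseteq> K \<Longrightarrow> H = K"
  proof -
    have "finite ?A" by simp
    moreover have "?A \<noteq> {}" using \<open>{0} \<in> ?A\<close> by blast
    ultimately obtain m where "m \<in> ?A" "\<forall>b\<in>?A. m \<le> b \<longrightarrow> m = b"
      using finite_has_maximal[of ?A] by blast
    then show ?thesis using that by blast
  qed
  have sgH: "sg H" and HU: "H \<noteq> UNIV" using H by auto
  obtain c where c: "c \<notin> H" using HU by auto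
  define mul where "mul k = of_nat k * c" for k
  have mulH: "of_nat k * x \<in> H" if "x \<in> H" for k x using sg_mult[OF sgH that] .
  have "\<not> inj_on mul {..CARD('a)}"
  proof
    assume "inj_on mul {..CARD('a)}"
    then have "card (mul ` {..CARD('a)}) = Suc CARD('a)" by (simp add: card_image)
    moreover have "card (mul ` {..CARD('a)}) \<le> CARD('a)" by (rule card_mono) auto
    ultimately show False by simp
  qed
  then obtain i0 j0 where ij0: "i0 \<noteq> j0" "mul i0 = mul j0"
    unfolding inj_on_def by blast
  obtain i j where ij: "i < j" "mul i = mul j"
  proof (cases "i0 < j0")
    case True then show ?thesis using that ij0 by blast
  next
    case False then have "j0 < i0" using ij0 by simp
    then show ?thesis using that ij0 by (metis)
  qed
  have "mul (j - i) = mul j - mul i" using ij by (simp add: mul_def of_nat_diff algebra_simps)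
  then have "mul (j - i) = 0" using ij by simp
  then have ex: "\<exists>k. 0 < k \<and> mul k \<in> H" using ij sgH by (intro exI[of _ "j - i"]) (auto simp: sg_def)
  define r where "r = (LEAST k. 0 < k \<and> mul k \<in> H)"
  have r: "0 < r" "mul r \<in> H" using LeastI_ex[OF ex] unfolding r_def by auto
  have rmin: "mul k \<notin> H" if "0 < k" "k < r" for k
    using not_less_Least[of k "\<lambda>k. 0 < k \<and> mul k \<in> H"] that unfolding r_def by auto
  have "r \<noteq> 1" using r c by (auto simp: mul_def)
  with r have r2: "r \<ge> 2" by simp
  have mul_split: "mul k = of_nat (k div r) * mul r + mul (k mod r)" for k
  proof -
    have "(of_nat k::'a) = of_nat (k div r * r + k mod r)" by simp
    also have "\<dots> = of_nat (k div r) * of_nat r + of_nat (k mod r)" by (simp only: of_nat_add of_nat_mult)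
    finally show ?thesis unfolding mul_def by (simp add: algebra_simps)
  qed
  define S where "S = {mul k + h | k h. h \<in> H}"
  have sgS: "sg S" unfolding sg_def
  proof (intro conjI ballI)
    show "0 \<in> S" unfolding S_def using sgH by (auto simp: sg_def mul_def intro!: exI[of _ 0])
  next
    fix x y assume "x \<in> S" "y \<in> S"
    then obtain k1 h1 k2 h2 where "x = mul k1 + h1" "h1 \<in> H" "y = mul k2 + h2" "h2 \<in> H"
      unfolding S_def by auto
    then show "x + y \<in> S" unfolding S_def using sgH
      by (intro CollectI exI[of _ "k1 + k2"] exI[of _ "h1 + h2"])
         (auto simp: sg_def mul_def algebra_simps)
  next
    fix x assume "x \<in> S"
    then obtain k h where kh: "x = mul k + h" "h \<in> H" unfolding S_def by auto
    have m: "of_nat k * mul r \<in> H" using mulH[OF r(2)] .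
    have "- x = mul (k * (r - 1)) + (- (of_nat k * mul r) - h)"
      using kh r(1) by (simp add: mul_def of_nat_diff algebra_simps)
    moreover have "- (of_nat k * mul r) \<in> H" using m sgH by (auto simp: sg_def)
    then have "- (of_nat k * mul r) - h \<in> H" using kh(2) sg_diff[OF sgH] by blast
    ultimately show "- x \<in> S" unfolding S_def by blast
  qed
  have "H \<subseteq> S"
  proof
    fix x assume "x \<in> H"
    then show "x \<in> S" unfolding S_def by (intro CollectI exI[of _ 0] exI[of _ x]) (simp add: mul_def)
  qed
  moreover have "c \<in> S" unfolding S_def using sgH
    by (intro CollectI exI[of _ 1] exI[of _ 0]) (auto simp: sg_def mul_def)
  ultimately have SU: "S = UNIV" using Hmax[of S] sgS c by blast
  have decomp: "\<exists>j<r. x - mul j \<in> H" for x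
  proof -
    have "x \<in> S" using SU by simp
    then obtain k h where kh: "x = mul k + h" "h \<in> H" unfolding S_def by auto
    have "mul k = of_nat (k div r) * mul r + mul (k mod r)"
      using mul_split by blast
    then have "x - mul (k mod r) = of_nat (k div r) * mul r + h" using kh by simp
    moreover have "of_nat (k div r) * mul r + h \<in> H" using mulH[OF r(2)] kh(2) sgH by (auto simp: sg_def)
    ultimately show ?thesis using r(1) by (intro exI[of _ "k mod r"]) auto
  qed
  have uniq: "j1 = j2" if "j1 < r" "j2 < r" "x - mul j1 \<in> H" "x - mul j2 \<in> H" for x j1 j2
  proof (rule ccontr)
    assume "j1 \<noteq> j2"
    then consider "j1 < j2" | "j2 < j1" by linarith
    then show False
    proof cases
      case 1
      have "mul (j2 - j1) = (x - mul j1) - (x - mul j2)"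
        using 1 by (simp add: mul_def of_nat_diff algebra_simps)
      then have "mul (j2 - j1) \<in> H" using sg_diff[OF sgH that(3,4)] by simp
      then show False using rmin[of "j2 - j1"] 1 that by simp
    next
      case 2
      have "mul (j1 - j2) = (x - mul j2) - (x - mul j1)"
        using 2 by (simp add: mul_def of_nat_diff algebra_simps)
      then have "mul (j1 - j2) \<in> H" using sg_diff[OF sgH that(4,3)] by simp
      then show False using rmin[of "j1 - j2"] 2 that by simp
    qed
  qed
  define J where "J x = (THE j. j < r \<and> x - mul j \<in> H)" for x
  have J: "J x < r \<and> x - mul (J x) \<in> H" for x
  proof -
    obtain j where "j < r" "x - mul j \<in> H" using decomp by blast
    then have P: "j < r \<and> x - mul j \<in> H" by simp
    show ?thesis unfolding J_def
      by (rule theI[where P="\<lambda>j. j < r \<and> x - mul j \<in> H", OF P]) (use P uniq in blast)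
  qed
  have Jeq: "J x = j" if "j < r" "x - mul j \<in> H" for x j
    using uniq[OF _ that(1) _ that(2)] J by blast
  have Jadd: "J (x + y) = (J x + J y) mod r" for x y
  proof (rule Jeq)
    show "(J x + J y) mod r < r" using r(1) by simp
    let ?n = "J x + J y"
    have e: "mul ?n = of_nat (?n div r) * mul r + mul (?n mod r)"
      using mul_split by blast
    have "x + y - mul (?n mod r) = (x - mul (J x)) + (y - mul (J y)) + of_nat (?n div r) * mul r"
      using e by (simp add: mul_def algebra_simps)
    moreover have "(x - mul (J x)) + (y - mul (J y)) + of_nat (?n div r) * mul r \<in> H"
      using J[of x] J[of y] mulH[OF r(2)] sgH unfolding sg_def by blast
    ultimately show "x + y - mul (?n mod r) \<in> H" by metis
  qed
  define \<omega> where "\<omega> = cis (2 * pi / real r)"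
  have \<omega>r: "\<omega> ^ r = 1"
  proof -
    have "\<omega> ^ r = cis (real r * (2 * pi / real r))" unfolding \<omega>_def by (rule Complex.DeMoivre)
    also have "real r * (2 * pi / real r) = 2 * pi" using r(1) by simp
    finally show ?thesis by simp
  qed
  have \<omega>mod: "\<omega> ^ (n mod r) = \<omega> ^ n" for n
  proof -
    have "\<omega> ^ n = \<omega> ^ (r * (n div r) + n mod r)" by (simp only: mult_div_mod_eq)
    also have "\<dots> = (\<omega> ^ r) ^ (n div r) * \<omega> ^ (n mod r)" by (simp only: power_add power_mult)
    also have "\<dots> = \<omega> ^ (n mod r)" by (simp add: \<omega>r)
    finally show ?thesis by simp
  qed
  define \<psi> where "\<psi> x = \<omega> ^ J x" for x
  have "\<psi> (x + y) = \<psi> x * \<psi> y" for x y unfolding \<psi>_def Jadd \<omega>mod by (simp add: power_add)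
  moreover have "norm (\<psi> x) = 1" for x unfolding \<psi>_def \<omega>_def by (simp add: norm_power)
  moreover have "\<psi> c \<noteq> 1"
  proof -
    have "J c = 1" using r2 sgH by (intro Jeq) (auto simp: mul_def sg_def)
    then have "\<psi> c = \<omega>" unfolding \<psi>_def by simp
    moreover have "\<omega> \<noteq> 1"
    proof
      assume "\<omega> = 1"
      then have "cos (2 * pi / real r) = 1" unfolding \<omega>_def by (metis cis.sel(1) one_complex.sel(1))
      then obtain n :: int where n: "2 * pi / real r = real_of_int n * 2 * pi" using cos_one_2pi_int by blast
      have "1 / real r = (2 * pi / real r) / (2 * pi)" by simp
      also have "\<dots> = real_of_int n" using n by simp
      finally have "1 / real r = real_of_int n" .
      moreover have "0 < 1 / real r" "1 / real r < 1" using r2 by auto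
      ultimately have "0 < n" "n < 1" by auto
      then show False by simp
    qed
    ultimately show ?thesis by simp
  qed
  ultimately show ?thesis by blast
qed

definition is_char :: "('a::{finite,field} \<Rightarrow> complex) \<Rightarrow> bool" where
  "is_char \<psi> \<longleftrightarrow> (\<forall>x y. \<psi> (x + y) = \<psi> x * \<psi> y) \<and> (\<forall>x. norm (\<psi> x) = 1) \<and> (\<exists>c. \<psi> c \<noteq> 1)"

definition psi :: "'a::{finite,field} \<Rightarrow> complex" where
  "psi = (SOME \<psi>. is_char \<psi>)"

lemma psi_char: "is_char (psi :: 'a::{finite,field} \<Rightarrow> complex)"
proof -
  have "\<exists>\<psi>::'a \<Rightarrow> complex. is_char \<psi>" using char_exists unfolding is_char_def .
  then show ?thesis unfolding psi_def by (rule someI_ex)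
qed

lemma psi_props: "(\<forall>x y::'a::{finite,field}. psi (x + y) = psi x * psi y) \<and> (\<forall>x::'a. norm (psi x) = 1) \<and> (\<exists>c::'a. psi c \<noteq> 1)"
  using psi_char unfolding is_char_def .

lemma psi_add: "psi (x + y) = psi x * psi y" using psi_props by blast
lemma psi_norm: "norm (psi x) = 1" using psi_props by blast
lemma psi_nz: "psi x \<noteq> 0" using psi_norm[of x] by (metis norm_zero zero_neq_one)

lemma psi_0[simp]: "psi (0::'a::{finite,field}) = 1"
proof -
  have h: "psi (0::'a) = psi (0::'a) * psi (0::'a)" using psi_add[of "0::'a" 0] by (subst (asm) add_0_right) assumption
  then have "psi (0::'a) = 0 \<or> psi (0::'a) = 1" by (subst (asm) mult_cancel_left1)
  then show ?thesis using psi_nz[of "0::'a"] by blast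
qed

lemma psi_neg: "psi (- x) = cnj (psi x)"
proof -
  have "psi (-x) * psi x = 1" using psi_add[of "-x" x] by simp
  moreover have "cnj (psi x) * psi x = 1"
    using complex_norm_square[of "psi x"] psi_norm[of x] by (simp add: mult.commute)
  ultimately show ?thesis using psi_nz[of x] by (metis mult_cancel_right)
qed

lemma psi_sum: "finite S \<Longrightarrow> psi (\<Sum>i\<in>S. f i) = (\<Prod>i\<in>S. psi (f i))"
  by (induction S rule: finite_induct) (auto simp: psi_add)

lemma psi_sum_UNIV: "(\<Sum>x\<in>UNIV. psi (x::'a::{finite,field})) = 0"
proof -
  obtain c :: 'a where c: "psi c \<noteq> 1" using psi_props by blast
  have "(\<Sum>x\<in>UNIV. psi (x::'a)) = (\<Sum>x\<in>UNIV. psi (x + c))" using sum_shift_add[of psi c] by simp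
  also have "\<dots> = psi c * (\<Sum>x\<in>UNIV. psi (x::'a))" by (simp add: psi_add sum_distrib_left mult.commute)
  finally have "(1 - psi c) * (\<Sum>x\<in>UNIV. psi (x::'a)) = 0" by (simp add: algebra_simps)
  then show ?thesis using c by simp
qed

lemma psi_orth: "(\<Sum>x\<in>UNIV. psi (a * (x::'a::{finite,field}))) = (if a = 0 then of_nat CARD('a) else 0)"
proof (cases "a = 0")
  case False
  then show ?thesis using sum_shift_mult[OF False, of psi] psi_sum_UNIV by simp
qed simp

abbreviation qc :: "'a::{finite,field} \<Rightarrow> complex" where
  "qc a \<equiv> of_int (qchar a)"

definition gauss :: "'a::{finite,field} itself \<Rightarrow> complex" where
  "gauss _ = (\<Sum>t\<in>UNIV. qc (t::'a) * psi t)"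

lemma gauss_eta:
  assumes odd: "odd CARD('a::{finite,field})"
  shows "(\<Sum>t\<in>UNIV. qc t * psi (c * t)) = qc (c::'a) * gauss TYPE('a)"
proof (cases "c = 0")
  case True
  have "(\<Sum>t\<in>UNIV. qc (t::'a)) = of_int (\<Sum>t\<in>UNIV. qchar (t::'a))" by simp
  then show ?thesis using True qchar_sum_zero[OF odd] by simp
next
  case False
  have "(\<Sum>t\<in>UNIV. qc t * psi (c * t)) = (\<Sum>t\<in>UNIV. qc (inverse c * t) * psi (c * (inverse c * t)))"
    using sum_shift_mult[of "inverse c" "\<lambda>t. qc t * psi (c * t)"] False by simp
  also have "\<dots> = (\<Sum>t\<in>UNIV. qc c * (qc (t::'a) * psi t))"
    using False by (simp add: qchar_mult[OF odd] qchar_inverse[OF odd] mult_ac)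
  finally show ?thesis by (simp add: gauss_def sum_distrib_left mult_ac)
qed

lemma card_sqrt: 
  assumes odd: "odd CARD('a::{finite,field})"
  shows "int (card {t. t^2 = (u::'a)}) = 1 + qchar u"
proof (cases "u = 0")
  case True
  then have "{t::'a. t^2 = u} = {0}" by auto
  then show ?thesis using True by simp
next
  case False
  show ?thesis
  proof (cases "\<exists>b. b^2 = u")
    case True
    then obtain b where b: "b^2 = u" by blast
    then have b0: "b \<noteq> 0" using False by auto
    have "b \<noteq> -b" using b0 two_ne_0[OF odd] by (metis add_eq_0_iff2 mult_2 mult_eq_0_iff)
    have "{t. t^2 = u} = {b, -b}" using b sq_eq_sq_iff[of _ b] by auto
    then show ?thesis using \<open>b \<noteq> -b\<close> True False by (simp add: qchar_def)
  next
    case nb: False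
    then have "{t. t^2 = u} = {}" by auto
    then show ?thesis using nb False by (simp add: qchar_def)
  qed
qed

lemma sum_sq:
  assumes odd: "odd CARD('a::{finite,field})"
  shows "(\<Sum>t\<in>UNIV. f (t^2)) = (\<Sum>u\<in>UNIV. (1 + qc (u::'a)) * (f u :: complex))"
proof -
  have "(\<Sum>u\<in>UNIV. (1 + qc (u::'a)) * f u) = (\<Sum>u\<in>UNIV. of_nat (card {t. t^2 = u}) * f u)"
  proof (rule sum.cong[OF refl])
    fix u :: 'a
    have "(of_nat (card {t. t^2 = u}) :: complex) = of_int (int (card {t. t^2 = u}))" by simp
    also have "\<dots> = 1 + qc u" using card_sqrt[OF odd, of u] by simp
    finally show "(1 + qc u) * f u = of_nat (card {t. t^2 = u}) * f u" by simp
  qed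
  also have "\<dots> = (\<Sum>u\<in>UNIV. \<Sum>t\<in>{t. t^2 = u}. f u)" by simp
  also have "\<dots> = (\<Sum>u\<in>UNIV. \<Sum>t\<in>UNIV. if t^2 = u then f (t^2) else 0)"
    by (rule sum.cong[OF refl]) (simp add: sum.If_cases Int_def)
  also have "\<dots> = (\<Sum>t\<in>UNIV. \<Sum>u\<in>UNIV. if t^2 = u then f (t^2) else 0)" by (rule sum.swap)
  also have "\<dots> = (\<Sum>t\<in>UNIV. f (t^2))" by simp
  finally show ?thesis by simp
qed

lemma gauss1:
  assumes odd: "odd CARD('a::{finite,field})" and s: "s \<noteq> 0"
  shows "(\<Sum>t\<in>UNIV. psi (s * t^2)) = qc (s::'a) * gauss TYPE('a)"
proof -
  have "(\<Sum>t\<in>UNIV. psi (s * t^2)) = (\<Sum>u\<in>UNIV. (1 + qc u) * psi (s * u))"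
    using sum_sq[OF odd, of "\<lambda>u. psi (s * u)"] by simp
  also have "\<dots> = (\<Sum>u\<in>UNIV. psi (s * u)) + (\<Sum>u\<in>UNIV. qc u * psi (s * u))"
    by (simp add: algebra_simps sum.distrib)
  also have "\<dots> = qc s * gauss TYPE('a)" using psi_orth[of s] s gauss_eta[OF odd] by simp
  finally show ?thesis .
qed

lemma gauss_sq:
  assumes odd: "odd CARD('a::{finite,field})"
  shows "gauss TYPE('a) ^ 2 = qc (-1::'a) * of_nat CARD('a)"
proof -
  let ?G = "gauss TYPE('a)"
  have "?G ^ 2 = (\<Sum>b\<in>UNIV. qc (b::'a) * psi b * ?G)"
    by (simp add: power2_eq_square gauss_def sum_distrib_right)
  also have "\<dots> = (\<Sum>b\<in>UNIV. psi b * (\<Sum>t\<in>UNIV. qc t * psi ((b::'a) * t)))"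
    by (rule sum.cong[OF refl]) (simp add: gauss_eta[OF odd] mult_ac)
  also have "\<dots> = (\<Sum>b\<in>UNIV. \<Sum>t\<in>UNIV. qc t * psi ((b::'a) * (1 + t)))"
    by (rule sum.cong[OF refl]) (simp add: sum_distrib_left distrib_left psi_add mult.left_commute)
  also have "\<dots> = (\<Sum>t\<in>UNIV. qc t * (\<Sum>b\<in>UNIV. psi ((b::'a) * (1 + t))))"
    by (subst sum.swap) (simp add: sum_distrib_left)
  also have "\<dots> = (\<Sum>t\<in>UNIV. if t = (-1::'a) then qc t * of_nat CARD('a) else 0)"
  proof (rule sum.cong[OF refl])
    fix t :: 'a
    have "(\<Sum>b\<in>UNIV. psi ((b::'a) * (1 + t))) = (\<Sum>b\<in>UNIV. psi ((1 + t) * b))"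
      by (simp only: mult.commute)
    also have "\<dots> = (if 1 + t = 0 then of_nat CARD('a) else 0)" by (rule psi_orth)
    finally show "qc t * (\<Sum>b\<in>UNIV. psi ((b::'a) * (1 + t))) = (if t = (-1::'a) then qc t * of_nat CARD('a) else 0)"
      by (simp add: add_eq_0_iff)
  qed
  also have "\<dots> = qc (-1::'a) * of_nat CARD('a)" by simp
  finally show ?thesis .
qed

lemma complete_square:
  assumes odd: "odd CARD('a::{finite,field})" and s: "s \<noteq> 0"
  shows "(\<Sum>t\<in>UNIV. psi (s * t^2 + b * t)) = psi (- (b^2 / (4 * s))) * qc (s::'a) * gauss TYPE('a)"
proof -
  have two: "(2::'a) \<noteq> 0" using two_ne_0[OF odd] .
  define c where "c = b / (2 * s)"
  have bsc: "b = 2 * s * c" unfolding c_def using s two by simp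
  have four: "(4::'a) \<noteq> 0" using two by (metis mult_eq_0_iff numeral_Bit0 mult_2_right)
  have "b^2 = (4 * s) * (s * c^2)" unfolding bsc by (simp add: power2_eq_square algebra_simps)
  then have q4: "b^2 / (4 * s) = s * c^2" using s four by simp
  have e: "s * (t + - c)^2 + b * (t + - c) = s * t^2 + (- (b^2 / (4 * s)))" for t
    unfolding q4 unfolding bsc by (simp add: power2_eq_square algebra_simps)
  have "(\<Sum>t\<in>UNIV. psi (s * t^2 + b * t)) = (\<Sum>t\<in>UNIV. psi (s * (t + - c)^2 + b * (t + - c)))"
    using sum_shift_add[of "\<lambda>t. psi (s * t^2 + b * t)" "- c"] by simp
  also have "\<dots> = (\<Sum>t\<in>UNIV. psi (s * t^2) * psi (- (b^2 / (4 * s))))"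
    by (simp only: e psi_add)
  also have "\<dots> = psi (- (b^2 / (4 * s))) * qc s * gauss TYPE('a)"
    using gauss1[OF odd s] by (simp add: sum_distrib_right[symmetric] mult_ac)
  finally show ?thesis .
qed

definition dotp :: "'a::{finite,field}^'n \<Rightarrow> 'a^'n \<Rightarrow> 'a" where
  "dotp m v = (\<Sum>i\<in>UNIV. m$i * v$i)"

definition nrm :: "'a::{finite,field}^'n \<Rightarrow> 'a" where
  "nrm v = (\<Sum>i\<in>UNIV. (v$i)^2)"

definition ev :: "'a::{finite,field}^'n \<Rightarrow> 'a^'n \<Rightarrow> complex" where
  "ev m v = psi (dotp m v)"

lemma fdist_nrm: "fdist x y = nrm (x - y)"
  unfolding fdist_def nrm_def by simp

lemma prod_sum_vec:
  fixes h :: "'n::finite \<Rightarrow> 'a::finite \<Rightarrow> complex"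
  shows "(\<Sum>v\<in>(UNIV::('a^'n) set). \<Prod>i\<in>UNIV. h i (v$i)) = (\<Prod>i\<in>UNIV. \<Sum>t\<in>UNIV. h i t)"
proof -
  have "(\<Prod>i\<in>UNIV. \<Sum>t\<in>UNIV. h i t) = (\<Sum>g\<in>PiE UNIV (\<lambda>_. UNIV). \<Prod>i\<in>UNIV. h i (g i))"
    by (rule prod_sum_PiE) auto
  also have "PiE UNIV (\<lambda>_. UNIV) = (UNIV :: ('n \<Rightarrow> 'a) set)" by simp
  also have "(\<Sum>g\<in>(UNIV :: ('n \<Rightarrow> 'a) set). \<Prod>i\<in>UNIV. h i (g i)) = (\<Sum>v\<in>(UNIV::('a^'n) set). \<Prod>i\<in>UNIV. h i (v$i))"
    by (rule sum.reindex_bij_witness[where i = vec_nth and j = vec_lambda]) auto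
  finally show ?thesis by simp
qed

lemma dotp_add: "dotp m (a + b) = dotp m a + dotp m b"
  unfolding dotp_def by (simp add: distrib_left sum.distrib)

lemma dotp_neg: "dotp m (- a) = - dotp m a"
  unfolding dotp_def by (simp add: sum_negf)

lemma dotp_comm: "dotp m v = dotp v m"
  unfolding dotp_def by (simp add: mult.commute)

lemma ev_add: "ev m (a + b) = ev m a * ev m b"
  unfolding ev_def by (simp add: dotp_add psi_add)

lemma ev_neg: "ev m (- a) = cnj (ev m a)"
  unfolding ev_def by (simp add: dotp_neg psi_neg)

lemma ev_diff: "ev m (a - b) = ev m a * cnj (ev m b)"
  using ev_add[of m a "-b"] ev_neg[of m b] by simp

lemma ev_zero[simp]: "ev m 0 = 1"
  unfolding ev_def dotp_def by simp

lemma ev_prod: "ev m v = (\<Prod>i\<in>UNIV. psi (m$i * v$i))"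
  unfolding ev_def dotp_def by (simp add: psi_sum)

lemma orth_vec:
  fixes w :: "'a::{finite,field}^'n"
  shows "(\<Sum>m\<in>UNIV. ev m w) = (if w = 0 then of_nat CARD('a) ^ CARD('n) else 0)"
proof -
  have "(\<Sum>m\<in>UNIV. ev m w) = (\<Prod>i\<in>UNIV. \<Sum>t\<in>UNIV. psi (w$i * t))"
    unfolding ev_prod using prod_sum_vec[of "\<lambda>i t. psi (t * w$i)"] by (simp add: mult.commute)
  also have "\<dots> = (\<Prod>i\<in>(UNIV::'n set). if w$i = 0 then of_nat CARD('a) else 0)"
    by (simp add: psi_orth)
  also have "\<dots> = (if w = 0 then of_nat CARD('a) ^ CARD('n) else 0)"
  proof (cases "w = 0")
    case True then show ?thesis by simp
  next
    case False
    then obtain i where "w$i \<noteq> 0" by (auto simp: vec_eq_iff)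
    then show ?thesis using False by (intro trans[OF prod_zero]) auto
  qed
  finally show ?thesis .
qed

lemma orth_vec':
  fixes m :: "'a::{finite,field}^'n"
  shows "(\<Sum>v\<in>UNIV. ev m v) = (if m = 0 then of_nat CARD('a) ^ CARD('n) else 0)"
  using orth_vec[of m] unfolding ev_def by (simp add: dotp_comm)

lemma gauss_vec:
  fixes m :: "'a::{finite,field}^'n"
  assumes odd: "odd CARD('a)" and s: "s \<noteq> 0"
  shows "(\<Sum>v\<in>UNIV. psi (s * nrm v + dotp m v)) = psi (- (nrm m / (4 * s))) * (qc s * gauss TYPE('a)) ^ CARD('n)"
proof -
  have e: "psi (s * nrm v + dotp m v) = (\<Prod>i\<in>UNIV. psi (s * (v$i)^2 + m$i * v$i))" for v :: "'a^'n"
  proof -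
    have "s * nrm v + dotp m v = (\<Sum>i\<in>UNIV. s * (v$i)^2 + m$i * v$i)"
      unfolding nrm_def dotp_def by (simp add: sum.distrib sum_distrib_left)
    then show ?thesis by (simp add: psi_sum)
  qed
  have "(\<Sum>v\<in>UNIV. psi (s * nrm v + dotp m v)) = (\<Prod>i\<in>(UNIV::'n set). \<Sum>t\<in>UNIV. psi (s * t^2 + m$i * t))"
    unfolding e by (rule prod_sum_vec)
  also have "\<dots> = (\<Prod>i\<in>(UNIV::'n set). psi (- ((m$i)^2 / (4 * s))) * (qc s * gauss TYPE('a)))"
    by (simp add: complete_square[OF odd s] mult.assoc)
  also have "\<dots> = (\<Prod>i\<in>(UNIV::'n set). psi (- ((m$i)^2 / (4 * s)))) * (qc s * gauss TYPE('a)) ^ CARD('n)"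
    by (simp add: prod.distrib)
  also have "(\<Prod>i\<in>(UNIV::'n set). psi (- ((m$i)^2 / (4 * s)))) = psi (\<Sum>i\<in>UNIV. - ((m$i)^2 / (4 * s)))"
    by (simp add: psi_sum)
  also have "(\<Sum>i\<in>UNIV. - ((m$i)^2 / (4 * s))) = - (nrm m / (4 * s))"
    unfolding nrm_def by (simp add: sum_negf sum_divide_distrib)
  finally show ?thesis .
qed

lemma sum_inverse_UNIV:
  fixes f :: "'a::{finite,field} \<Rightarrow> complex"
  shows "(\<Sum>s\<in>UNIV. f (inverse s)) = (\<Sum>s\<in>UNIV. f s)"
  by (rule sum.reindex_bij_witness[where i = inverse and j = inverse]) auto

lemma sum_split0:
  fixes f :: "'a::{finite,field} \<Rightarrow> complex"
  shows "(\<Sum>s\<in>UNIV. f s) = f 0 + (\<Sum>s\<in>UNIV - {0}. f s)"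
  by (simp add: sum.remove[of UNIV 0])

lemma qc_pow_even:
  fixes s :: "'a::{finite,field}"
  assumes "s \<noteq> 0" "even d"
  shows "qc s ^ d = 1"
proof -
  obtain k where d: "d = 2 * k" using assms(2) by blast
  have "qc s ^ 2 = 1" using qchar_sq_nonzero[OF assms(1)]
    by (simp add: power2_eq_square of_int_mult[symmetric] del: of_int_mult)
  then show ?thesis unfolding d by (simp add: power_mult)
qed

lemma four_ne_0: "odd CARD('a::{finite,field}) \<Longrightarrow> (4::'a) \<noteq> 0"
  using two_ne_0 by (metis mult_eq_0_iff numeral_Bit0 mult_2_right)

lemma S_val:
  fixes m :: "'a::{finite,field}^'n"
  assumes odd: "odd CARD('a)" and ev: "even CARD('n)"
  shows "(\<Sum>v\<in>UNIV. psi (s * nrm v + dotp m v)) =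
    (if s = 0 then (if m = 0 then of_nat CARD('a) ^ CARD('n) else 0)
     else gauss TYPE('a) ^ CARD('n) * psi (- (nrm m / 4) * inverse s))"
proof (cases "s = 0")
  case True
  then show ?thesis using orth_vec'[of m] unfolding ev_def by simp
next
  case False
  have "- (nrm m / (4 * s)) = - (nrm m / 4) * inverse s" using False four_ne_0[OF odd]
    by (simp add: field_simps)
  then have h1: "psi (- (nrm m / (4 * s))) = psi (- (nrm m / 4) * inverse s)" by (rule arg_cong)
  have h2: "(qc s * gauss TYPE('a)) ^ CARD('n) = gauss TYPE('a) ^ CARD('n)"
    using qc_pow_even[OF False ev] by (simp add: power_mult_distrib)
  have "(\<Sum>v\<in>UNIV. psi (s * nrm v + dotp m v)) = psi (- (nrm m / (4 * s))) * (qc s * gauss TYPE('a)) ^ CARD('n)"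
    by (rule gauss_vec[OF odd False])
  also have "\<dots> = gauss TYPE('a) ^ CARD('n) * psi (- (nrm m / 4) * inverse s)"
    unfolding h1 h2 by (rule mult.commute)
  finally show ?thesis using False by simp
qed

lemma E_hat:
  fixes m :: "'a::{finite,field}^'n"
  assumes odd: "odd CARD('a)" and ev: "even CARD('n)"
  shows "of_nat CARD('a) * (\<Sum>v\<in>UNIV. (if nrm v = 0 then 1 else 0) * ev m v) =
    (if m = 0 then of_nat CARD('a) ^ CARD('n) else 0)
    + gauss TYPE('a) ^ CARD('n) * ((if nrm m = 0 then of_nat CARD('a) else 0) - 1)"
proof -
  let ?G = "gauss TYPE('a) ^ CARD('n)"
  let ?c = "- (nrm m / 4)"
  have ind: "of_nat CARD('a) * (if nrm v = 0 then 1 else 0) = (\<Sum>s\<in>UNIV. psi (s * nrm v))" for v :: "'a^'n"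
    using psi_orth[of "nrm v"] by (simp add: mult.commute)
  have "of_nat CARD('a) * (\<Sum>v\<in>UNIV. (if nrm v = 0 then 1 else 0) * ev m v)
      = (\<Sum>v\<in>UNIV. (of_nat CARD('a) * (if nrm v = 0 then 1 else 0)) * ev m v)"
    by (simp add: sum_distrib_left mult.assoc)
  also have "\<dots> = (\<Sum>v\<in>UNIV. \<Sum>s\<in>UNIV. psi (s * nrm v + dotp m v))"
    unfolding ind by (simp add: sum_distrib_right ev_def psi_add)
  also have "\<dots> = (\<Sum>s\<in>UNIV. \<Sum>v\<in>UNIV. psi (s * nrm v + dotp m v))"
    by (rule sum.swap)
  also have "\<dots> = (\<Sum>s\<in>UNIV. (if s = 0 then (if m = 0 then of_nat CARD('a) ^ CARD('n) else 0)
     else ?G * psi (?c * inverse s)))"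
    by (simp only: S_val[OF odd ev])
  also have "\<dots> = (if m = 0 then of_nat CARD('a) ^ CARD('n) else 0) + (\<Sum>s\<in>UNIV - {0}. ?G * psi (?c * inverse s))"
    by (subst sum_split0) simp
  also have "(\<Sum>s\<in>UNIV - {0}. ?G * psi (?c * inverse s)) = (\<Sum>s\<in>UNIV. ?G * psi (?c * inverse s)) - ?G"
    by (subst sum_split0[of "\<lambda>s. ?G * psi (?c * inverse s)"]) simp
  also have "(\<Sum>s\<in>UNIV. ?G * psi (?c * inverse s)) = (\<Sum>s\<in>UNIV. ?G * psi (?c * s))"
    by (rule sum_inverse_UNIV[of "\<lambda>s. ?G * psi (?c * s)"])
  also have "\<dots> = ?G * (\<Sum>s\<in>UNIV. psi (?c * s))"
    by (simp only: sum_distrib_left)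
  also have "(\<Sum>s\<in>UNIV. psi (?c * s)) = (if ?c = 0 then of_nat CARD('a) else 0)"
    by (rule psi_orth)
  also have "(?c = 0) = (nrm m = 0)" using four_ne_0[OF odd] by simp
  finally show ?thesis by (simp add: algebra_simps)
qed

lemma gauss_ne_0:
  assumes odd: "odd CARD('a::{finite,field})"
  shows "gauss TYPE('a) \<noteq> 0"
proof
  assume "gauss TYPE('a) = 0"
  then have "qc (-1::'a) * of_nat CARD('a) = 0" using gauss_sq[OF odd] by simp
  moreover have "qc (-1::'a) \<noteq> 0" unfolding qchar_def by simp
  ultimately show False by simp
qed

lemma H_hat:
  fixes m :: "'a::{finite,field}^'n"
  assumes odd: "odd CARD('a)" and ev: "even CARD('n)"
  shows "(\<Sum>v\<in>UNIV. qc (nrm v) * ev m v) = gauss TYPE('a) ^ CARD('n) * qc (- nrm m)"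
proof -
  let ?g = "gauss TYPE('a)"
  let ?G = "gauss TYPE('a) ^ CARD('n)"
  let ?c = "- (nrm m / 4)"
  have ge: "qc a * ?g = (\<Sum>s\<in>UNIV. qc s * psi (s * a))" for a :: 'a
    using gauss_eta[OF odd, of a] by (simp add: mult.commute)
  have "?g * (\<Sum>v\<in>UNIV. qc (nrm v) * ev m v) = (\<Sum>v\<in>UNIV. (qc (nrm v) * ?g) * ev m v)"
    by (simp add: sum_distrib_left mult_ac)
  also have "\<dots> = (\<Sum>v\<in>UNIV. \<Sum>s\<in>UNIV. qc s * psi (s * nrm v + dotp m v))"
    unfolding ge by (simp add: sum_distrib_right ev_def psi_add mult.assoc)
  also have "\<dots> = (\<Sum>s\<in>UNIV. qc s * (\<Sum>v\<in>UNIV. psi (s * nrm v + dotp m v)))"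
    by (subst sum.swap) (simp add: sum_distrib_left)
  also have "\<dots> = (\<Sum>s\<in>UNIV. qc s * (?G * psi (?c * inverse s)))"
    by (rule sum.cong[OF refl]) (simp add: S_val[OF odd ev])
  also have "\<dots> = (\<Sum>s\<in>UNIV. ?G * (qc (inverse s) * psi (?c * inverse s)))"
    by (rule sum.cong[OF refl]) (simp add: qchar_inverse[OF odd] mult_ac)
  also have "\<dots> = (\<Sum>s\<in>UNIV. ?G * (qc s * psi (?c * s)))"
    by (rule sum_inverse_UNIV[of "\<lambda>s. ?G * (qc s * psi (?c * s))"])
  also have "\<dots> = ?G * (\<Sum>s\<in>UNIV. qc s * psi (?c * s))"
    by (simp only: sum_distrib_left)
  also have "(\<Sum>s\<in>UNIV. qc s * psi (?c * s)) = qc ?c * ?g"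
    by (rule gauss_eta[OF odd])
  also have "qchar ?c = qchar (- nrm m)"
  proof -
    have "?c = (- nrm m) * inverse ((2::'a)^2)" by (simp add: field_simps)
    then have "qchar ?c = qchar ((- nrm m) * inverse ((2::'a)^2))" by (rule arg_cong)
    also have "\<dots> = qchar (- nrm m) * qchar (inverse ((2::'a)^2))" by (rule qchar_mult[OF odd])
    also have "qchar (inverse ((2::'a)^2)) = 1"
      using qchar_inverse[OF odd, of "(2::'a)^2"] qchar_sq[OF two_ne_0[OF odd]] by simp
    finally show ?thesis by simp
  qed
  finally have "?g * (\<Sum>v\<in>UNIV. qc (nrm v) * ev m v) = ?g * (?G * qc (- nrm m))"
    by (simp add: mult_ac)
  then show ?thesis using gauss_ne_0[OF odd] by simp
qed

lemma inversion:
  fixes k :: "'a::{finite,field}^'n \<Rightarrow> complex"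
  shows "of_nat CARD('a) ^ CARD('n) * k w = (\<Sum>m\<in>UNIV. (\<Sum>v\<in>UNIV. k v * ev m v) * cnj (ev m w))"
proof -
  have "(\<Sum>m\<in>UNIV. (\<Sum>v\<in>UNIV. k v * ev m v) * cnj (ev m w)) = (\<Sum>m\<in>UNIV. \<Sum>v\<in>UNIV. k v * ev m (v - w))"
    by (simp add: sum_distrib_right ev_diff mult.assoc)
  also have "\<dots> = (\<Sum>v\<in>UNIV. k v * (\<Sum>m\<in>UNIV. ev m (v - w)))"
    by (subst sum.swap) (simp add: sum_distrib_left)
  also have "\<dots> = (\<Sum>v\<in>UNIV. if v = w then k v * of_nat CARD('a) ^ CARD('n) else 0)"
    by (rule sum.cong[OF refl]) (simp add: orth_vec)
  also have "\<dots> = of_nat CARD('a) ^ CARD('n) * k w" by simp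
  finally show ?thesis by simp
qed

lemma quad_form:
  fixes k :: "'a::{finite,field}^'n \<Rightarrow> complex" and A :: "('a^'n) set"
  shows "of_nat CARD('a) ^ CARD('n) * (\<Sum>x\<in>A. \<Sum>y\<in>A. k (x - y)) =
     (\<Sum>m\<in>UNIV. (\<Sum>v\<in>UNIV. k v * ev m v) * (cnj (\<Sum>x\<in>A. ev m x) * (\<Sum>y\<in>A. ev m y)))"
proof -
  let ?K = "\<lambda>m. \<Sum>v\<in>UNIV. k v * ev m v"
  have "of_nat CARD('a) ^ CARD('n) * (\<Sum>x\<in>A. \<Sum>y\<in>A. k (x - y)) =
      (\<Sum>x\<in>A. \<Sum>y\<in>A. of_nat CARD('a) ^ CARD('n) * k (x - y))"
    by (simp add: sum_distrib_left)
  also have "\<dots> = (\<Sum>x\<in>A. \<Sum>y\<in>A. \<Sum>m\<in>UNIV. ?K m * (cnj (ev m x) * ev m y))"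
  proof (intro sum.cong refl)
    fix x y
    show "of_nat CARD('a) ^ CARD('n) * k (x - y) = (\<Sum>m\<in>UNIV. ?K m * (cnj (ev m x) * ev m y))"
      unfolding inversion[of k "x - y"] ev_diff by simp
  qed
  also have "\<dots> = (\<Sum>x\<in>A. \<Sum>m\<in>UNIV. \<Sum>y\<in>A. ?K m * (cnj (ev m x) * ev m y))"
    by (rule sum.cong[OF refl]) (rule sum.swap)
  also have "\<dots> = (\<Sum>m\<in>UNIV. \<Sum>x\<in>A. \<Sum>y\<in>A. ?K m * (cnj (ev m x) * ev m y))"
    by (rule sum.swap)
  also have "\<dots> = (\<Sum>m\<in>UNIV. ?K m * (cnj (\<Sum>x\<in>A. ev m x) * (\<Sum>y\<in>A. ev m y)))"
  proof (rule sum.cong[OF refl])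
    fix m
    have "cnj (\<Sum>x\<in>A. ev m x) * (\<Sum>y\<in>A. ev m y) = (\<Sum>x\<in>A. \<Sum>y\<in>A. cnj (ev m x) * ev m y)"
      by (simp only: cnj_sum sum_product)
    then show "(\<Sum>x\<in>A. \<Sum>y\<in>A. ?K m * (cnj (ev m x) * ev m y)) = ?K m * (cnj (\<Sum>x\<in>A. ev m x) * (\<Sum>y\<in>A. ev m y))"
      by (simp only: sum_distrib_left)
  qed
  finally show ?thesis .
qed

lemma quad_bound:
  fixes k :: "'a::{finite,field}^'n \<Rightarrow> real" and A :: "('a^'n) set"
    and \<kappa> :: "'a^'n \<Rightarrow> real"
  assumes K: "\<And>m. (\<Sum>v\<in>UNIV. of_real (k v) * ev m v) = of_real (\<kappa> m)"
    and mu: "\<And>m. \<kappa> m \<le> \<mu>"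
  shows "(\<Sum>x\<in>A. \<Sum>y\<in>A. k (x - y)) \<le> \<mu> * real (card A)"
proof -
  define nf where "nf m = (cmod (\<Sum>x\<in>A. ev m x))^2" for m
  define qd :: real where "qd = real CARD('a) ^ CARD('n)"
  have qd0: "qd > 0" unfolding qd_def by simp
  have cF: "cnj (\<Sum>x\<in>A. ev m x) * (\<Sum>y\<in>A. ev m y) = of_real (nf m)" for m
    unfolding nf_def using complex_norm_square[of "\<Sum>x\<in>A. ev m x"] by (simp add: mult.commute)
  have "of_real (qd * (\<Sum>x\<in>A. \<Sum>y\<in>A. k (x - y))) = (of_nat CARD('a) ^ CARD('n) * (\<Sum>x\<in>A. \<Sum>y\<in>A. complex_of_real (k (x - y))) :: complex)"
    unfolding qd_def by simp
  also have "\<dots> = (\<Sum>m\<in>UNIV. of_real (\<kappa> m) * of_real (nf m))"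
    unfolding quad_form[of "\<lambda>v. complex_of_real (k v)" A] K cF by (rule refl)
  also have "\<dots> = of_real (\<Sum>m\<in>UNIV. \<kappa> m * nf m)" by simp
  finally have e1: "qd * (\<Sum>x\<in>A. \<Sum>y\<in>A. k (x - y)) = (\<Sum>m\<in>UNIV. \<kappa> m * nf m)"
    by (simp only: of_real_eq_iff)
  define d0 :: "'a^'n \<Rightarrow> complex" where "d0 v = (if v = 0 then 1 else 0)" for v
  have K0: "(\<Sum>v\<in>UNIV. d0 v * ev m v) = 1" for m
  proof -
    have "(\<Sum>v\<in>UNIV. d0 v * ev m v) = (\<Sum>v\<in>UNIV. if v = 0 then ev m v else 0)"
      by (rule sum.cong) (auto simp: d0_def)
    then show ?thesis by simp
  qed
  have "of_real (qd * real (card A)) = (of_nat CARD('a) ^ CARD('n) * (\<Sum>x\<in>A. \<Sum>y\<in>A. d0 (x - y)) :: complex)"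
  proof -
    have "(\<Sum>x\<in>A. \<Sum>y\<in>A. d0 (x - y)) = (\<Sum>x\<in>A. 1)"
    proof (rule sum.cong[OF refl])
      fix x assume "x \<in> A"
      then show "(\<Sum>y\<in>A. d0 (x - y)) = 1" unfolding d0_def by (simp add: eq_commute[of x])
    qed
    then show ?thesis unfolding qd_def by simp
  qed
  also have "\<dots> = (\<Sum>m\<in>UNIV. of_real (nf m))"
    unfolding quad_form[of d0 A] K0 cF by simp
  also have "\<dots> = of_real (\<Sum>m\<in>UNIV. nf m)" by simp
  finally have e2: "qd * real (card A) = (\<Sum>m\<in>UNIV. nf m)"
    by (simp only: of_real_eq_iff)
  have "(\<Sum>m\<in>UNIV. \<kappa> m * nf m) \<le> (\<Sum>m\<in>UNIV. \<mu> * nf m)"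
    by (rule sum_mono) (simp add: mu mult_right_mono nf_def)
  also have "\<dots> = \<mu> * (qd * real (card A))" by (simp add: e2 sum_distrib_left)
  finally have "qd * (\<Sum>x\<in>A. \<Sum>y\<in>A. k (x - y)) \<le> qd * (\<mu> * real (card A))"
    using e1 by (simp add: mult_ac)
  then show ?thesis using qd0 by simp
qed

lemma SQ_sum:
  fixes A :: "('a::{finite,field}^'n) set"
  shows "real (SQ A) = (\<Sum>x\<in>A. \<Sum>y\<in>A. if qchar (fdist x y) = 1 then 1 else 0)"
proof -
  have e: "{(x, y). x \<in> A \<and> y \<in> A \<and> qchar (fdist x y) = 1} = {p \<in> A \<times> A. qchar (fdist (fst p) (snd p)) = 1}"
    by auto
  have "real (SQ A) = real (card {p \<in> A \<times> A. qchar (fdist (fst p) (snd p)) = 1})"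
    unfolding SQ_def e ..
  also have "\<dots> = (\<Sum>p\<in>A \<times> A. if qchar (fdist (fst p) (snd p)) = 1 then 1 else 0)"
    by (simp add: sum.If_cases Int_def)
  also have "\<dots> = (\<Sum>x\<in>A. \<Sum>y\<in>A. if qchar (fdist x y) = 1 then 1 else 0)"
    by (simp add: sum.cartesian_product split_def)
  finally show ?thesis .
qed

lemma pair_ident:
  "real_of_int (qchar a) + 1 - (if a = 0 then 1 else 0) = 2 * (if qchar a = 1 then 1 else 0)"
  using qchar_range[of a] by (auto simp: qchar_def)

lemma Gd_val:
  assumes odd: "odd CARD('a::{finite,field})" and ev: "even d"
  shows "gauss TYPE('a) ^ d = complex_of_real ((real_of_int (qchar (-1::'a)) * real CARD('a)) ^ (d div 2))"
proof -
  have "gauss TYPE('a) ^ d = (gauss TYPE('a) ^ 2) ^ (d div 2)"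
    using ev by (simp add: power_mult[symmetric])
  also have "\<dots> = (qc (-1::'a) * of_nat CARD('a)) ^ (d div 2)" by (simp add: gauss_sq[OF odd])
  finally show ?thesis by simp
qed

lemma K_iso:
  fixes m :: "'a::{finite,field}^'n"
  assumes odd: "odd CARD('a)" and ev: "even CARD('n)"
  defines "g \<equiv> (real_of_int (qchar (-1::'a)) * real CARD('a)) ^ (CARD('n) div 2)"
  defines "qd \<equiv> real CARD('a) ^ CARD('n)"
  shows "(\<Sum>v\<in>UNIV. complex_of_real (real_of_int (qchar (nrm v)) - (if nrm v = 0 then 1 else 0) + c) * ev m v)
     = complex_of_real (g * real_of_int (qchar (- nrm m))
         - ((if m = 0 then qd else 0) + g * ((if nrm m = 0 then real CARD('a) else 0) - 1)) / real CARD('a)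
         + c * (if m = 0 then qd else 0))"
proof -
  have Gd: "gauss TYPE('a) ^ CARD('n) = complex_of_real g" unfolding g_def by (rule Gd_val[OF odd ev])
  have Eh: "(\<Sum>v\<in>UNIV. (if nrm v = 0 then 1 else 0) * ev m v) =
     complex_of_real (((if m = 0 then qd else 0) + g * ((if nrm m = 0 then real CARD('a) else 0) - 1)) / real CARD('a))"
  proof -
    have "of_nat CARD('a) * (\<Sum>v\<in>UNIV. (if nrm v = 0 then 1 else 0) * ev m v) =
      complex_of_real ((if m = 0 then qd else 0) + g * ((if nrm m = 0 then real CARD('a) else 0) - 1))"
      unfolding E_hat[OF odd ev] Gd qd_def by simp
    moreover have "(of_nat CARD('a) :: complex) \<noteq> 0" by simp
    ultimately show ?thesis by (simp add: field_simps)
  qed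
  have pt: "complex_of_real (real_of_int (qchar (nrm v)) - (if nrm v = 0 then 1 else 0) + c) * ev m v
     = qc (nrm v) * ev m v - (if nrm v = 0 then 1 else 0) * ev m v + of_real c * ev m v" for v
    by (cases "nrm v = 0") (simp_all add: algebra_simps)
  have "(\<Sum>v\<in>UNIV. complex_of_real (real_of_int (qchar (nrm v)) - (if nrm v = 0 then 1 else 0) + c) * ev m v)
     = (\<Sum>v\<in>UNIV. qc (nrm v) * ev m v) - (\<Sum>v\<in>UNIV. (if nrm v = 0 then 1 else 0) * ev m v)
       + of_real c * (\<Sum>v\<in>UNIV. ev m v)"
    by (simp only: pt sum.distrib sum_subtractf sum_distrib_left)
  also have "\<dots> = complex_of_real g * qc (- nrm m) - complex_of_real (((if m = 0 then qd else 0) + g * ((if nrm m = 0 then real CARD('a) else 0) - 1)) / real CARD('a))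
       + of_real c * (if m = 0 then complex_of_real qd else 0)"
    unfolding H_hat[OF odd ev] Gd Eh orth_vec' qd_def by simp
  also have "\<dots> = complex_of_real (g * real_of_int (qchar (- nrm m))
         - ((if m = 0 then qd else 0) + g * ((if nrm m = 0 then real CARD('a) else 0) - 1)) / real CARD('a)
         + c * (if m = 0 then qd else 0))"
    by simp
  finally show ?thesis .
qed

lemma K_plain:
  fixes m :: "'a::{finite,field}^'n"
  assumes odd: "odd CARD('a)" and ev: "even CARD('n)"
  defines "g \<equiv> (real_of_int (qchar (-1::'a)) * real CARD('a)) ^ (CARD('n) div 2)"
  defines "qd \<equiv> real CARD('a) ^ CARD('n)"
  shows "(\<Sum>v\<in>UNIV. complex_of_real (real_of_int (qchar (nrm v)) + c) * ev m v)
     = complex_of_real (g * real_of_int (qchar (- nrm m)) + c * (if m = 0 then qd else 0))"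
proof -
  have Gd: "gauss TYPE('a) ^ CARD('n) = complex_of_real g" unfolding g_def by (rule Gd_val[OF odd ev])
  have "(\<Sum>v\<in>UNIV. complex_of_real (real_of_int (qchar (nrm v)) + c) * ev m v)
     = (\<Sum>v\<in>UNIV. qc (nrm v) * ev m v) + of_real c * (\<Sum>v\<in>UNIV. ev m v)"
    by (simp add: algebra_simps sum.distrib sum_distrib_left)
  also have "\<dots> = complex_of_real (g * real_of_int (qchar (- nrm m)) + c * (if m = 0 then qd else 0))"
    unfolding H_hat[OF odd ev] Gd orth_vec' qd_def by simp
  finally show ?thesis .
qed

lemma sum_pairs_1:
  fixes A :: "('a::{finite,field}^'n) set"
  shows "(\<Sum>x\<in>A. \<Sum>y\<in>A. real_of_int (qchar (nrm (x - y))) - (if nrm (x - y) = 0 then 1 else 0) + c)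
     = 2 * real (SQ A) - real (card A) ^ 2 + c * real (card A) ^ 2"
proof -
  have pt: "real_of_int (qchar (nrm (x - y))) - (if nrm (x - y) = 0 then 1 else 0) + c
     = 2 * (if qchar (fdist x y) = 1 then 1 else 0) + (c - 1)" for x y :: "'a^'n"
    using pair_ident[of "nrm (x - y)"] by (simp add: fdist_nrm algebra_simps)
  have "(\<Sum>x\<in>A. \<Sum>y\<in>A. real_of_int (qchar (nrm (x - y))) - (if nrm (x - y) = 0 then 1 else 0) + c)
     = (\<Sum>x\<in>A. \<Sum>y\<in>A. 2 * (if qchar (fdist x y) = 1 then 1 else 0) + (c - 1))"
    by (simp only: pt)
  also have "\<dots> = 2 * real (SQ A) + (c - 1) * real (card A) ^ 2"
    unfolding SQ_sum by (simp add: sum.distrib sum_distrib_left power2_eq_square)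
  finally show ?thesis by (simp add: algebra_simps)
qed

lemma sum_pairs_2:
  fixes A :: "('a::{finite,field}^'n) set"
  shows "(\<Sum>x\<in>A. \<Sum>y\<in>A. real_of_int (qchar (nrm (x - y))) + c)
     \<ge> 2 * real (SQ A) - real (card A) ^ 2 + real (card A) + c * real (card A) ^ 2"
proof -
  have "(\<Sum>x\<in>A. \<Sum>y\<in>A. real_of_int (qchar (nrm (x - y))) + c)
     = (\<Sum>x\<in>A. \<Sum>y\<in>A. real_of_int (qchar (nrm (x - y))) - (if nrm (x - y) = 0 then 1 else 0) + c)
       + (\<Sum>x\<in>A. \<Sum>y\<in>A. (if nrm (x - y) = 0 then 1 else 0))"
    by (simp add: sum.distrib[symmetric])
  moreover have "(\<Sum>x\<in>A. \<Sum>y\<in>A. (if nrm (x - y) = 0 then 1 else 0)) \<ge> (\<Sum>x\<in>A. (1::real))"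
  proof (rule sum_mono)
    fix x assume x: "x \<in> A"
    have "(\<Sum>y\<in>A. (if nrm (x - y) = 0 then 1 else 0::real)) \<ge> (\<Sum>y\<in>{x}. (if nrm (x - y) = 0 then 1 else 0))"
      using x by (intro sum_mono2) auto
    then show "(\<Sum>y\<in>A. (if nrm (x - y) = 0 then 1 else 0::real)) \<ge> 1" by (simp add: nrm_def)
  qed
  ultimately show ?thesis using sum_pairs_1[where A=A and c=c] by simp
qed

lemma bnd1:
  fixes Q q e qd :: real
  assumes "Q > 0" "q > 0" "e \<in> {-1,0,1}" "isz \<Longrightarrow> e = 0" "z \<Longrightarrow> isz" "qd = Q^2"
  shows "(- Q) * e - ((if z then qd else 0) + (- Q) * ((if isz then q else 0) - 1)) / q
         + (1 / q) * (if z then qd else 0) \<le> Q - Q / q"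
proof -
  have "(- Q) * e - ((if z then qd else 0) + (- Q) * ((if isz then q else 0) - 1)) / q
         + (1 / q) * (if z then qd else 0) = (- Q) * e + Q * (if isz then 1 else 0) - Q / q"
    using assms(2) by (simp add: field_simps)
  also have "\<dots> \<le> Q - Q / q"
    using assms by (cases isz) auto
  finally show ?thesis .
qed

lemma bnd2:
  fixes Q q e qd :: real
  assumes "Q > 0" "q > 0" "e \<in> {-1,0,1}" "isz \<Longrightarrow> e = 0" "z \<Longrightarrow> isz" "qd = Q^2"
  shows "Q * e - ((if z then qd else 0) + Q * ((if isz then q else 0) - 1)) / q
         + (2 / Q + 1 / q) * (if z then qd else 0) \<le> Q + Q / q"
proof (cases z)
  case True
  then have "isz" "e = 0" using assms by auto
  then have "Q * e - ((if z then qd else 0) + Q * ((if isz then q else 0) - 1)) / q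
         + (2 / Q + 1 / q) * (if z then qd else 0) = Q + Q / q"
    using True assms(1,2,6) by (simp add: field_simps power2_eq_square)
  then show ?thesis by simp
next
  case False
  have "Q * e - ((if z then qd else 0) + Q * ((if isz then q else 0) - 1)) / q
         + (2 / Q + 1 / q) * (if z then qd else 0) = Q * e - Q * (if isz then 1 else 0) + Q / q"
    using False assms(2) by (simp add: field_simps)
  also have "\<dots> \<le> Q + Q / q" using assms by (cases isz) auto
  finally show ?thesis .
qed

lemma bnd3:
  fixes Q g e qd :: real
  assumes "Q > 0" "g = Q \<or> g = - Q" "e \<in> {-1,0,1}" "z \<Longrightarrow> e = 0" "qd = Q^2"
  shows "g * e + (1 / Q) * (if z then qd else 0) \<le> Q"
  using assms by (cases z) (auto simp: power2_eq_square)

lemma main_iso: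
  fixes A :: "('a::{finite,field}^'n) set"
  assumes odd: "odd CARD('a)" and ev: "even CARD('n)"
  defines "g \<equiv> (real_of_int (qchar (-1::'a)) * real CARD('a)) ^ (CARD('n) div 2)"
  defines "qd \<equiv> real CARD('a) ^ CARD('n)"
  assumes bound: "\<And>m::'a^'n. g * real_of_int (qchar (- nrm m))
         - ((if m = 0 then qd else 0) + g * ((if nrm m = 0 then real CARD('a) else 0) - 1)) / real CARD('a)
         + c * (if m = 0 then qd else 0) \<le> \<mu>"
  shows "2 * real (SQ A) - real (card A) ^ 2 + c * real (card A) ^ 2 \<le> \<mu> * real (card A)"
proof -
  have "(\<Sum>x\<in>A. \<Sum>y\<in>A. (\<lambda>v. real_of_int (qchar (nrm v)) - (if nrm v = 0 then 1 else 0) + c) (x - y)) \<le> \<mu> * real (card A)"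
    by (rule quad_bound[where \<kappa> = "\<lambda>m. g * real_of_int (qchar (- nrm m))
         - ((if m = 0 then qd else 0) + g * ((if nrm m = 0 then real CARD('a) else 0) - 1)) / real CARD('a)
         + c * (if m = 0 then qd else 0)"])
       (use K_iso[OF odd ev] bound in \<open>simp_all add: g_def qd_def\<close>)
  then show ?thesis using sum_pairs_1[where A=A and c=c] by simp
qed

lemma main_plain:
  fixes A :: "('a::{finite,field}^'n) set"
  assumes odd: "odd CARD('a)" and ev: "even CARD('n)"
  defines "g \<equiv> (real_of_int (qchar (-1::'a)) * real CARD('a)) ^ (CARD('n) div 2)"
  defines "qd \<equiv> real CARD('a) ^ CARD('n)"
  assumes bound: "\<And>m::'a^'n. g * real_of_int (qchar (- nrm m)) + c * (if m = 0 then qd else 0) \<le> \<mu>"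
  shows "2 * real (SQ A) - real (card A) ^ 2 + real (card A) + c * real (card A) ^ 2 \<le> \<mu> * real (card A)"
proof -
  have "(\<Sum>x\<in>A. \<Sum>y\<in>A. (\<lambda>v. real_of_int (qchar (nrm v)) + c) (x - y)) \<le> \<mu> * real (card A)"
    by (rule quad_bound[where \<kappa> = "\<lambda>m. g * real_of_int (qchar (- nrm m)) + c * (if m = 0 then qd else 0)"])
       (use K_plain[OF odd ev] bound in \<open>simp_all add: g_def qd_def\<close>)
  then show ?thesis using sum_pairs_2[where A=A and c=c] by simp
qed

lemma fin_step1: "2 * (x1::real) - (x2::real) + (x3::real) \<le> (x4::real) \<Longrightarrow> (x5::real) = (x2 - x3 + x4) / 2 \<Longrightarrow> x1 \<le> x5"
  by (simp add: field_simps)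

lemma fin_step2: "2 * (x1::real) - (x2::real) + (x6::real) + (x3::real) \<le> (x4::real) \<Longrightarrow> (x5::real) = (x2 - x6 - x3 + x4) / 2 \<Longrightarrow> x1 \<le> x5"
  by (simp add: field_simps)

lemma nrm_0[simp]: "nrm (0::'a::{finite,field}^'n) = 0"
  unfolding nrm_def by simp

theorem theorem1p5:
  fixes A :: "('a::{finite,field} ^ 'n) set"
  defines "q \<equiv> real CARD('a)" and "d \<equiv> CARD('n)" and "N \<equiv> real (card A)"
  assumes qodd: "odd CARD('a)"
  shows
    "(d mod 4 = 2 \<and> CARD('a) mod 4 = 3 \<longrightarrow>
        real (SQ A) \<le> N^2/2 + q^(d div 2) * N / 2 - N^2/(2*q) - q^((d-2) div 2) * N / 2)
   \<and> (d mod 4 = 0 \<or> (d mod 4 = 2 \<and> CARD('a) mod 4 = 1) \<longrightarrow>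
        (N \<ge> (q^(d div 2) + q) / (1 + 1 / q^((d-2) div 2)) \<longrightarrow>
           real (SQ A) \<le> N^2/2 + q^(d div 2) * N / 2 - N^2 / q^(d div 2) - N^2/(2*q)
                          + q^((d-2) div 2) * N / 2)
      \<and> (N \<le> (q^(d div 2) + q) / (1 + 1 / q^((d-2) div 2)) \<longrightarrow>
           real (SQ A) \<le> N^2/2 + q^(d div 2) * N / 2 - N^2 / (2 * q^(d div 2)) - N / 2))"
proof -
  define Q where "Q = q ^ (d div 2)"
  define Q' where "Q' = q ^ ((d - 2) div 2)"
  have q0: "q > 0" unfolding q_def by simp
  have d1: "d \<ge> 1" unfolding d_def by simp
  have Q0: "Q > 0" unfolding Q_def using q0 by simp
  have common: "Q = Q' * q \<and> real CARD('a) ^ CARD('n) = Q ^ 2" if ev: "even d"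
  proof -
    have "d \<ge> 2" using ev d1 by presburger
    then have "d div 2 = Suc ((d - 2) div 2)" by presburger
    then have "Q = Q' * q" unfolding Q_def Q'_def by simp
    moreover have "real CARD('a) ^ CARD('n) = Q ^ 2"
      unfolding Q_def q_def d_def using ev[unfolded d_def] by (simp add: power_mult[symmetric])
    ultimately show ?thesis by simp
  qed
  have facts: "real_of_int (qchar (- nrm m)) \<in> {-1,0,1}" "nrm m = 0 \<Longrightarrow> real_of_int (qchar (- nrm m)) = 0"
    "m = 0 \<Longrightarrow> nrm m = 0"
    for m :: "'a^'n"
    using qchar_range[of "- nrm m"] by auto
  show ?thesis
  proof (intro conjI impI)
    assume c1: "d mod 4 = 2 \<and> CARD('a) mod 4 = 3"
    have ev: "even d" using c1 by presburger
    obtain QQ: "Q = Q' * q" and qd: "real CARD('a) ^ CARD('n) = Q ^ 2" using common[OF ev] by blast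
    have m1: "qchar (-1::'a) = -1" using qchar_minus_one_3[OF qodd] c1 by simp
    have "odd (d div 2)" using c1 by presburger
    then have g: "(real_of_int (qchar (-1::'a)) * q) ^ (CARD('n) div 2) = - Q"
      unfolding m1 Q_def d_def by (simp add: power_minus_odd)
    have qd': "q ^ CARD('n) = Q ^ 2" using qd unfolding q_def .
    have b1: "(- Q) * real_of_int (qchar (- nrm m)) - ((if m = 0 then Q^2 else 0) + (- Q) * ((if nrm m = 0 then q else 0) - 1)) / q
         + (1 / q) * (if m = 0 then Q^2 else 0) \<le> Q - Q / q" for m :: "'a^'n"
      by (rule bnd1[OF Q0 q0]) (use facts in auto)
    have "2 * real (SQ A) - real (card A) ^ 2 + (1 / q) * real (card A) ^ 2 \<le> (Q - Q / q) * real (card A)"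
    proof (rule main_iso[OF qodd ev[unfolded d_def]])
      fix m :: "'a^'n"
      show "(real_of_int (qchar (-1::'a)) * real CARD('a)) ^ (CARD('n) div 2) * real_of_int (qchar (- nrm m))
         - ((if m = 0 then real CARD('a) ^ CARD('n) else 0) + (real_of_int (qchar (-1::'a)) * real CARD('a)) ^ (CARD('n) div 2) * ((if nrm m = 0 then real CARD('a) else 0) - 1)) / real CARD('a)
         + (1 / q) * (if m = 0 then real CARD('a) ^ CARD('n) else 0) \<le> Q - Q / q"
        unfolding q_def[symmetric] g qd' by (rule b1)
    qed
    then have "2 * real (SQ A) - N ^ 2 + (1 / q) * N ^ 2 \<le> (Q - Q / q) * N" unfolding N_def .
    moreover have "Q / q = Q'" using QQ q0 by simp
    moreover have "N^2/2 + q^(d div 2) * N / 2 - N^2/(2*q) - q^((d-2) div 2) * N / 2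
        = (N ^ 2 - (1 / q) * N ^ 2 + (Q - Q') * N) / 2"
      unfolding Q_def[symmetric] Q'_def[symmetric] using q0 by (simp add: field_simps)
    ultimately show "real (SQ A) \<le> N^2/2 + q^(d div 2) * N / 2 - N^2/(2*q) - q^((d-2) div 2) * N / 2"
      by simp
  next
    assume c2: "d mod 4 = 0 \<or> (d mod 4 = 2 \<and> CARD('a) mod 4 = 1)"
    have ev: "even d" using c2 by presburger
    obtain QQ: "Q = Q' * q" and qd: "real CARD('a) ^ CARD('n) = Q ^ 2" using common[OF ev] by blast
    have qd': "q ^ CARD('n) = Q ^ 2" using qd unfolding q_def .
    have g: "(real_of_int (qchar (-1::'a)) * q) ^ (CARD('n) div 2) = Q"
      using c2
    proof
      assume "d mod 4 = 0"
      then have "even (d div 2)" by presburger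
      moreover have "qchar (-1::'a) = -1 \<or> qchar (-1::'a) = 1"
        using qchar_range[of "-1::'a"] by (auto simp: qchar_def)
      ultimately show ?thesis unfolding Q_def d_def by (auto simp: power_minus_even)
    next
      assume "d mod 4 = 2 \<and> CARD('a) mod 4 = 1"
      then have "qchar (-1::'a) = 1" using qchar_minus_one_1[OF qodd] by simp
      then show ?thesis unfolding Q_def d_def by simp
    qed
    {
      assume "N \<ge> (q^(d div 2) + q) / (1 + 1 / q^((d-2) div 2))"
      have b2: "Q * real_of_int (qchar (- nrm m)) - ((if m = 0 then Q^2 else 0) + Q * ((if nrm m = 0 then q else 0) - 1)) / q
         + (2 / Q + 1 / q) * (if m = 0 then Q^2 else 0) \<le> Q + Q / q" for m :: "'a^'n"
        by (rule bnd2[OF Q0 q0]) (use facts in auto)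
      have "2 * real (SQ A) - real (card A) ^ 2 + (2 / Q + 1 / q) * real (card A) ^ 2 \<le> (Q + Q / q) * real (card A)"
      proof (rule main_iso[OF qodd ev[unfolded d_def]])
        fix m :: "'a^'n"
        show "(real_of_int (qchar (-1::'a)) * real CARD('a)) ^ (CARD('n) div 2) * real_of_int (qchar (- nrm m))
           - ((if m = 0 then real CARD('a) ^ CARD('n) else 0) + (real_of_int (qchar (-1::'a)) * real CARD('a)) ^ (CARD('n) div 2) * ((if nrm m = 0 then real CARD('a) else 0) - 1)) / real CARD('a)
           + (2 / Q + 1 / q) * (if m = 0 then real CARD('a) ^ CARD('n) else 0) \<le> Q + Q / q"
          unfolding q_def[symmetric] g qd' by (rule b2)
      qed
      then have "2 * real (SQ A) - N ^ 2 + (2 / Q + 1 / q) * N ^ 2 \<le> (Q + Q / q) * N" unfolding N_def .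
      moreover have QQ': "Q / q = Q'" using QQ q0 by simp
      ultimately have i2: "2 * real (SQ A) - N ^ 2 + (2 / Q + 1 / q) * N ^ 2 \<le> (Q + Q') * N" by (simp only:)
      moreover have "N^2/2 + q^(d div 2) * N / 2 - N^2 / q^(d div 2) - N^2/(2*q) + q^((d-2) div 2) * N / 2
          = (N ^ 2 - (2 / Q + 1 / q) * N ^ 2 + (Q + Q') * N) / 2"
        unfolding Q_def[symmetric] Q'_def[symmetric] using q0 Q0 by (simp add: field_simps)
      then show "real (SQ A) \<le> N^2/2 + q^(d div 2) * N / 2 - N^2 / q^(d div 2) - N^2/(2*q)
                          + q^((d-2) div 2) * N / 2"
        by (rule fin_step1[OF i2])
    }
    {
      assume "N \<le> (q^(d div 2) + q) / (1 + 1 / q^((d-2) div 2))"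
      have b3: "Q * real_of_int (qchar (- nrm m)) + (1 / Q) * (if m = 0 then Q^2 else 0) \<le> Q" for m :: "'a^'n"
        by (rule bnd3[OF Q0]) (use facts in auto)
      have "2 * real (SQ A) - real (card A) ^ 2 + real (card A) + (1 / Q) * real (card A) ^ 2 \<le> Q * real (card A)"
      proof (rule main_plain[OF qodd ev[unfolded d_def]])
        fix m :: "'a^'n"
        show "(real_of_int (qchar (-1::'a)) * real CARD('a)) ^ (CARD('n) div 2) * real_of_int (qchar (- nrm m))
           + (1 / Q) * (if m = 0 then real CARD('a) ^ CARD('n) else 0) \<le> Q"
          unfolding q_def[symmetric] g qd' by (rule b3)
      qed
      then have "2 * real (SQ A) - N ^ 2 + N + (1 / Q) * N ^ 2 \<le> Q * N" unfolding N_def .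
      moreover have "N^2/2 + q^(d div 2) * N / 2 - N^2 / (2 * q^(d div 2)) - N / 2
          = (N ^ 2 - N - (1 / Q) * N ^ 2 + Q * N) / 2"
        unfolding Q_def[symmetric] using Q0 by (simp add: field_simps)
      ultimately show "real (SQ A) \<le> N^2/2 + q^(d div 2) * N / 2 - N^2 / (2 * q^(d div 2)) - N / 2"
        by (rule fin_step2)
    }
  qed
qed

end
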